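(* Let $n\geq 1$ and $N=n(n-1)/2$. For a graph $\Delta$ with vertex set $\{1,\dots,n\}$ let $\Delta^c$ be its complement in the complete graph $K_n$ (same vertex set, complementary edge set). The map $[\Delta]\mapsto[\Delta^c]$ on isomorphism classes induces, via $\alpha_{\mathcal{D}}\mapsto\alpha_{\mathcal{D}^c}$ (resp. $\alpha^{\mathrm{sgn}}_{\mathcal D}\mapsto\alpha^{\mathrm{sgn}}_{\mathcal D^c}$, $\alpha^{\mathrm{sgn}}_{\mathcal D}\mapsto\alpha_{\mathcal D^c}$), the following linear isomorphisms for every $0\le r\le N$: (1) if $n$ is even, $H^r(\Gamma_n;\mathbb{Q})\to H^{N-r}(\Gamma_n;\mathbb{Q})$; (2) if $n$ is even, $H^r(\Gamma_n;\mathbb{Q}_{\mathrm{sgn}})\to H^{N-r}(\Gamma_n;\mathbb{Q}_{\mathrm{sgn}})$; (3) if $n$ is odd, $H^r(\Gamma_n;\mathbb{Q}_{\mathrm{sgn}})\to H^{N-r}(\Gamma_n;\mathbb{Q})$.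
   Context: $\mathrm{Br}_n$ is the braid group on $n$ strands, $P_n$ the pure braid group, $S_n=\mathrm{Br}_n/P_n$, $\Gamma_n=\mathrm{Br}_n/[P_n,P_n]$, and $\mathbb{Z}\mathcal{A}_n=P_n/[P_n,P_n]\cong\mathbb{Z}^{n(n-1)/2}$, a normal subgroup of $\Gamma_n$ with quotient $S_n$. $H^\bullet(\mathbb{Z}\mathcal{A}_n;\mathbb{Q})$ is the exterior algebra on classes $\omega_{ij}$, $1\le i<j\le n$ (corresponding to $d\log(z_i-z_j)$), and $\sigma\in S_n$ acts by the algebra automorphism with $\sigma(\omega_{ij})=\omega_{\sigma(i)\sigma(j)}$ if $\sigma(i)<\sigma(j)$ and $\omega_{\sigma(j)\sigma(i)}$ otherwise. $\mathbb{Q}_{\mathrm{sgn}}$ is the sign representation of $S_n$, viewed as a $\Gamma_n$-module via $\Gamma_n\to S_n$; $H^\bullet(\mathbb{Z}\mathcal{A}_n;\mathbb{Q}_{\mathrm{sgn}})=\mathbb{Q}_{\mathrm{sgn}}\otimes H^\bullet(\mathbb{Z}\mathcal{A}_n;\mathbb{Q})$ as $S_n$-modules. For $M=\mathbb{Q}$ or $\mathbb{Q}_{\mathrm{sgn}}$, $H^\bullet(\Gamma_n;M)$ is identified (via restriction) with $H^\bullet(\mathbb{Z}\mathcal{A}_n;M)^{S_n}$. Graphs are finite simple graphs. For a graph $\Delta$ on vertex set $\{1,\dots,n\}$ with edges $(i_1,j_1),\dots,(i_k,j_k)$ ($i_t<j_t$) in lexicographic order, $\mu_\Delta=\omega_{i_1j_1}\cdots\omega_{i_kj_k}$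 (in either coefficient module). For an automorphism $\sigma$ of $\Delta$, $\mathrm{sgn}(\sigma)$ is its sign as a permutation of vertices and $\mathrm{sgn}_\Delta(\sigma)$ the sign of the induced permutation of edges. $\Delta$ is invariant if $\mathrm{sgn}_\Delta(\sigma)=1$ for all automorphisms $\sigma$, and skew-invariant if $\mathrm{sgn}(\sigma)\mathrm{sgn}_\Delta(\sigma)=1$ for all automorphisms $\sigma$. For an isomorphism class $\mathcal D$ of graphs on $n$ vertices choose a representative $\Delta_{\mathcal D}$ with vertex set $\{1,\dots,n\}$ and set $\alpha_{\mathcal D}=\frac{1}{|\mathrm{Stab}_{S_n}(\Delta_{\mathcal D})|}\sum_{\sigma\in S_n}\sigma(\mu_{\Delta_{\mathcal D}})\in H^\bullet(\mathbb{Z}\mathcal{A}_n;\mathbb{Q})$ and $\alpha^{\mathrm{sgn}}_{\mathcal D}$ by the same formula in $H^\bullet(\mathbb{Z}\mathcal{A}_n;\mathbb{Q}_{\mathrm{sgn}})$. The classes $\alpha_{\mathcal D}$ for invariant $\mathcal D$ form a basis of $H^\bullet(\Gamma_n;\mathbb{Q})$ and the $\alpha^{\mathrm{sgn}}_{\mathcal D}$ for skew-invariant $\mathcal D$ a basis of $H^\bullet(\Gamma_n;\mathbb{Q}_{\mathrm{sgn}})$; $\alpha_{\mathcal D}$ has degree equal to the number of edges. *)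

theory Defs
  imports Complex_Main "HOL-Combinatorics.Permutations"
begin

type_synonym edge = "nat \<times> nat"
type_synonym grph = "edge set"
(* elements of H^*(ZA_n;Q) (exterior algebra on the omega_ij): coefficient functions
   on edge sets; the basis monomial mu_E corresponds to the edge set E *)
type_synonym ext = "grph \<Rightarrow> rat"

definition edges :: "nat \<Rightarrow> grph" where
  "edges n = {(i,j). 1 \<le> i \<and> i < j \<and> j \<le> n}"

definition perms :: "nat \<Rightarrow> (nat \<Rightarrow> nat) set" where
  "perms n = {\<sigma>. \<sigma> permutes {1..n}}"

definition edge_act :: "(nat \<Rightarrow> nat) \<Rightarrow> edge \<Rightarrow> edge" where
  "edge_act \<sigma> e = (if \<sigma> (fst e) < \<sigma> (snd e) then (\<sigma> (fst e), \<sigma> (snd e))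
                      else (\<sigma> (snd e), \<sigma> (fst e)))"

definition lex_less :: "edge \<Rightarrow> edge \<Rightarrow> bool" where
  "lex_less e e' = (fst e < fst e' \<or> (fst e = fst e' \<and> snd e < snd e'))"

(* number of inversions created when sigma is applied to the lexicographically
   ordered product mu_E; sigma(mu_E) = (-1)^inv_count * mu_{sigma E} *)
definition inv_count :: "(nat \<Rightarrow> nat) \<Rightarrow> grph \<Rightarrow> nat" where
  "inv_count \<sigma> E = card {(e,e'). e \<in> E \<and> e' \<in> E \<and> lex_less e e'
                         \<and> lex_less (edge_act \<sigma> e') (edge_act \<sigma> e)}"

definition mu :: "grph \<Rightarrow> ext" where
  "mu E = (\<lambda>S. if S = E then 1 else 0)"

definition act :: "nat \<Rightarrow> (nat \<Rightarrow> nat) \<Rightarrow> ext \<Rightarrow> ext" where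
  "act n \<sigma> v = (\<lambda>S. \<Sum>E\<in>Pow (edges n).
      if edge_act \<sigma> ` E = S then (-1) ^ inv_count \<sigma> E * v E else 0)"

(* the S_n action on H^*(ZA_n;Q_sgn) = Q_sgn (x) H^*(ZA_n;Q) *)
definition act_sgn :: "nat \<Rightarrow> (nat \<Rightarrow> nat) \<Rightarrow> ext \<Rightarrow> ext" where
  "act_sgn n \<sigma> v = (\<lambda>S. of_int (sign \<sigma>) * act n \<sigma> v S)"

definition ext_deg :: "nat \<Rightarrow> nat \<Rightarrow> ext set" where
  "ext_deg n r = {v. \<forall>S. v S \<noteq> 0 \<longrightarrow> S \<subseteq> edges n \<and> card S = r}"

(* H^r(Gamma_n;Q) = H^r(ZA_n;Q)^{S_n} and H^r(Gamma_n;Q_sgn) *)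
definition H :: "nat \<Rightarrow> nat \<Rightarrow> ext set" where
  "H n r = {v \<in> ext_deg n r. \<forall>\<sigma>\<in>perms n. act n \<sigma> v = v}"

definition Hsgn :: "nat \<Rightarrow> nat \<Rightarrow> ext set" where
  "Hsgn n r = {v \<in> ext_deg n r. \<forall>\<sigma>\<in>perms n. act_sgn n \<sigma> v = v}"

definition stab :: "nat \<Rightarrow> grph \<Rightarrow> (nat \<Rightarrow> nat) set" where
  "stab n E = {\<sigma> \<in> perms n. edge_act \<sigma> ` E = E}"

definition alpha :: "nat \<Rightarrow> grph \<Rightarrow> ext" where
  "alpha n E = (\<lambda>S. (1 / of_nat (card (stab n E))) * (\<Sum>\<sigma>\<in>perms n. act n \<sigma> (mu E) S))"

definition alpha_sgn :: "nat \<Rightarrow> grph \<Rightarrow> ext" where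
  "alpha_sgn n E = (\<lambda>S. (1 / of_nat (card (stab n E))) * (\<Sum>\<sigma>\<in>perms n. act_sgn n \<sigma> (mu E) S))"

definition graph_iso :: "nat \<Rightarrow> grph \<Rightarrow> grph \<Rightarrow> bool" where
  "graph_iso n E E' = (\<exists>\<sigma>\<in>perms n. edge_act \<sigma> ` E = E')"

definition edge_sign :: "(nat \<Rightarrow> nat) \<Rightarrow> grph \<Rightarrow> int" where
  "edge_sign \<sigma> E = sign (\<lambda>e. if e \<in> E then edge_act \<sigma> e else e)"

definition invariant :: "nat \<Rightarrow> grph \<Rightarrow> bool" where
  "invariant n E = (\<forall>\<sigma>\<in>stab n E. edge_sign \<sigma> E = 1)"

definition skew_invariant :: "nat \<Rightarrow> grph \<Rightarrow> bool" where
  "skew_invariant n E = (\<forall>\<sigma>\<in>stab n E. sign \<sigma> * edge_sign \<sigma> E = 1)"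

definition lin_on :: "ext set \<Rightarrow> (ext \<Rightarrow> ext) \<Rightarrow> bool" where
  "lin_on A f = (\<forall>u\<in>A. \<forall>v\<in>A. \<forall>c::rat.
      f (\<lambda>S. u S + v S) = (\<lambda>S. f u S + f v S) \<and> f (\<lambda>S. c * u S) = (\<lambda>S. c * f u S))"

definition rep_choice :: "nat \<Rightarrow> (grph \<Rightarrow> grph) \<Rightarrow> bool" where
  "rep_choice n rep = ((\<forall>E. E \<subseteq> edges n \<longrightarrow> rep E \<subseteq> edges n \<and> graph_iso n E (rep E)) \<and>
     (\<forall>E E'. E \<subseteq> edges n \<longrightarrow> E' \<subseteq> edges n \<longrightarrow> graph_iso n E E' \<longrightarrow> rep E = rep E'))"

end

theory Submission
  imports Defs "HOL-Library.Product_Lexorder"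
begin

definition invs :: "('a::linorder \<Rightarrow> 'b::linorder) \<Rightarrow> 'a set \<Rightarrow> nat" where
 "invs g X = card {(x,y). x\<in>X \<and> y\<in>X \<and> x<y \<and> g y < g x}"

lemma xor_card:
  assumes "finite P"
  shows "card {p\<in>P. A p \<noteq> C p} + 2 * card {p\<in>P. A p \<and> C p} = card {p\<in>P. A p} + card {p\<in>P. C p}"
proof -
  have 1: "{p\<in>P. A p} \<union> {p\<in>P. C p} = {p\<in>P. A p \<noteq> C p} \<union> {p\<in>P. A p \<and> C p}" by auto
  have 2: "{p\<in>P. A p} \<inter> {p\<in>P. C p} = {p\<in>P. A p \<and> C p}" by auto
  have "card {p\<in>P. A p} + card {p\<in>P. C p} = card ({p\<in>P. A p} \<union> {p\<in>P. C p}) + card ({p\<in>P. A p} \<inter> {p\<in>P. C p})"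
    by (rule card_Un_Int) (use assms in auto)
  also have "card ({p\<in>P. A p} \<union> {p\<in>P. C p}) = card {p\<in>P. A p \<noteq> C p} + card {p\<in>P. A p \<and> C p}"
    unfolding 1 by (rule card_Un_disjoint) (use assms in auto)
  finally show ?thesis unfolding 2 by simp
qed

lemma invs_comp:
  assumes fin: "finite X" and ig: "inj_on g X" and ih: "inj_on h (g`X)"
  shows "even (invs (h\<circ>g) X + invs g X + invs h (g`X))"
proof -
  define P where "P = {(x,y). x\<in>X \<and> y\<in>X \<and> x<y}"
  have finP: "finite P" unfolding P_def
    by (rule finite_subset[of _ "X \<times> X"]) (use fin in auto)
  define A where "A = (\<lambda>p. g (snd p) < g (fst p))"
  define C where "C = (\<lambda>p. (g (fst p) < g (snd p) \<and> h (g (snd p)) < h (g (fst p))) \<or>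
                     (g (snd p) < g (fst p) \<and> h (g (fst p)) < h (g (snd p))))"
  have e1: "invs (h\<circ>g) X = card {p\<in>P. A p \<noteq> C p}"
  proof -
    have "{(x,y). x\<in>X \<and> y\<in>X \<and> x<y \<and> (h\<circ>g) y < (h\<circ>g) x} = {p\<in>P. A p \<noteq> C p}"
    proof (rule set_eqI, clarify)
      fix x y
      show "((x,y) \<in> {(x,y). x\<in>X \<and> y\<in>X \<and> x<y \<and> (h\<circ>g) y < (h\<circ>g) x}) = ((x,y) \<in> {p\<in>P. A p \<noteq> C p})"
      proof (cases "x \<in> X \<and> y \<in> X \<and> x < y")
        case True
        then have "g x \<noteq> g y" using ig by (metis inj_onD less_irrefl)
        moreover have "h (g x) \<noteq> h (g y)" using ih True \<open>g x \<noteq> g y\<close> by (meson image_eqI inj_onD)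
        ultimately show ?thesis using True unfolding P_def A_def C_def by auto
      next
        case False
        then show ?thesis unfolding P_def by auto
      qed
    qed
    then show ?thesis unfolding invs_def by simp
  qed
  have e2: "invs g X = card {p\<in>P. A p}"
    unfolding invs_def P_def A_def by (rule arg_cong[where f=card]) auto
  have e3: "invs h (g`X) = card {p\<in>P. C p}"
  proof -
    define \<phi> where "\<phi> = (\<lambda>p. (min (g (fst p)) (g (snd p)), max (g (fst p)) (g (snd p))))"
    have inj: "inj_on \<phi> {p\<in>P. C p}"
    proof (rule inj_onI)
      fix p p'
      assume a0: "p \<in> {p\<in>P. C p}" "p' \<in> {p\<in>P. C p}" "\<phi> p = \<phi> p'"
      obtain x y x' y' where pp: "p = (x,y)" "p' = (x',y')" by (cases p, cases p')
      have a: "\<phi> (x,y) = \<phi> (x',y')" using a0 pp by simp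
      have x: "x\<in>X" "y\<in>X" "x<y" "x'\<in>X" "y'\<in>X" "x'<y'" using a0 pp unfolding P_def by auto
      have "g x \<noteq> g y" using ig x by (metis inj_onD less_irrefl)
      have "g x' \<noteq> g y'" using ig x by (metis inj_onD less_irrefl)
      consider "g x = g x'" "g y = g y'" | "g x = g y'" "g y = g x'"
        using a \<open>g x \<noteq> g y\<close> \<open>g x' \<noteq> g y'\<close> unfolding \<phi>_def
        by (auto simp: min_def max_def split: if_splits)
      then show "p = p'"
      proof cases
        case 1 then have "x = x'" "y = y'" using ig x by (meson inj_onD)+
        then show ?thesis using pp by simp
      next
        case 2 then have "x = y'" "y = x'" using ig x by (meson inj_onD)+
        then show ?thesis using x pp by auto
      qed
    qed
    have im: "\<phi> ` {p\<in>P. C p} = {(u,v). u\<in>g`X \<and> v\<in>g`X \<and> u<v \<and> h v < h u}"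
    proof (rule set_eqI, rule iffI)
      fix q assume "q \<in> \<phi> ` {p\<in>P. C p}"
      then obtain x y where "(x,y) \<in> P" "C (x,y)" "q = \<phi> (x,y)" by auto
      then show "q \<in> {(u,v). u\<in>g`X \<and> v\<in>g`X \<and> u<v \<and> h v < h u}"
        unfolding P_def C_def \<phi>_def by (auto simp: min_def max_def)
    next
      fix q assume "q \<in> {(u,v). u\<in>g`X \<and> v\<in>g`X \<and> u<v \<and> h v < h u}"
      then obtain a b where ab: "a \<in> X" "b \<in> X" "g a < g b" "h (g b) < h (g a)" "q = (g a, g b)" by auto
      then have "a \<noteq> b" by auto
      show "q \<in> \<phi> ` {p\<in>P. C p}"
      proof (cases "a < b")
        case True
        then have "(a,b) \<in> {p\<in>P. C p}" using ab unfolding P_def C_def by auto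
        moreover have "q = \<phi> (a,b)" using ab unfolding \<phi>_def by auto
        ultimately show ?thesis by blast
      next
        case False
        then have "b < a" using \<open>a \<noteq> b\<close> by auto
        then have "(b,a) \<in> {p\<in>P. C p}" using ab unfolding P_def C_def by auto
        moreover have "q = \<phi> (b,a)" using ab unfolding \<phi>_def by auto
        ultimately show ?thesis by blast
      qed
    qed
    show ?thesis unfolding invs_def using card_image[OF inj] im by simp
  qed
  have "invs (h\<circ>g) X + invs g X + invs h (g`X) = 2 * (card {p\<in>P. A p \<noteq> C p} + card {p\<in>P. A p \<and> C p})"
    using xor_card[OF finP, of A C] e1 e2 e3 by simp
  then show ?thesis by simp
qed

definition crs :: "'a::linorder set \<Rightarrow> 'a set \<Rightarrow> nat" where
 "crs T S = card {(x,y). x\<in>S \<and> y\<in>T-S \<and> x<y}"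

lemma invs_split:
  assumes fin: "finite T" and sub: "S \<subseteq> T" and ig: "inj_on g T"
  shows "even (invs g T + invs g S + invs g (T-S) + crs T S + crs (g`T) (g`S))"
proof -
  define IS where "IS = {(x,y). x\<in>S \<and> y\<in>S \<and> x<y \<and> g y < g x}"
  define IC where "IC = {(x,y). x\<in>T-S \<and> y\<in>T-S \<and> x<y \<and> g y < g x}"
  define M where "M = {(x,y). x\<in>T \<and> y\<in>T \<and> x<y \<and> g y < g x \<and> (x\<in>S) \<noteq> (y\<in>S)}"
  have finTT: "finite (T \<times> T)" using fin by simp
  have fIS: "finite IS" by (rule finite_subset[OF _ finTT]) (use sub in \<open>auto simp: IS_def\<close>)
  have fIC: "finite IC" by (rule finite_subset[OF _ finTT]) (auto simp: IC_def)
  have fM: "finite M" by (rule finite_subset[OF _ finTT]) (auto simp: M_def)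
  have "{(x,y). x\<in>T \<and> y\<in>T \<and> x<y \<and> g y < g x} = (IS \<union> IC) \<union> M"
    using sub unfolding IS_def IC_def M_def by auto
  moreover have "card ((IS \<union> IC) \<union> M) = card (IS \<union> IC) + card M"
    by (rule card_Un_disjoint) (use fIS fIC fM in \<open>auto simp: IS_def IC_def M_def\<close>)
  moreover have "card (IS \<union> IC) = card IS + card IC"
    by (rule card_Un_disjoint) (use fIS fIC in \<open>auto simp: IS_def IC_def\<close>)
  ultimately have c1: "invs g T = card IS + card IC + card M"
    unfolding invs_def by simp
  have c2: "invs g S = card IS" unfolding invs_def IS_def ..
  have c3: "invs g (T-S) = card IC" unfolding invs_def IC_def ..
  define Q where "Q = S \<times> (T-S)"
  have fQ: "finite Q" unfolding Q_def using fin sub by (meson finite_Diff finite_SigmaI finite_subset)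
  define A where "A = (\<lambda>p::'a\<times>'a. fst p < snd p)"
  define C where "C = (\<lambda>p::'a\<times>'a. g (fst p) < g (snd p))"
  have cM: "card M = card {p\<in>Q. A p \<noteq> C p}"
  proof -
    define \<psi> where "\<psi> = (\<lambda>p::'a\<times>'a. if fst p \<in> S then p else (snd p, fst p))"
    have inj: "inj_on \<psi> M"
      by (rule inj_onI) (auto simp: \<psi>_def M_def split: if_splits)
    have "\<psi> ` M = {p\<in>Q. A p \<noteq> C p}"
    proof (rule set_eqI, rule iffI)
      fix q assume "q \<in> \<psi> ` M"
      then obtain x y where xy: "(x,y) \<in> M" "q = \<psi> (x,y)" by auto
      then have "g x \<noteq> g y" by (auto simp: M_def)
      then show "q \<in> {p\<in>Q. A p \<noteq> C p}" using xy unfolding M_def \<psi>_def Q_def A_def C_def by auto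
    next
      fix q assume q: "q \<in> {p\<in>Q. A p \<noteq> C p}"
      obtain x y where qxy: "q = (x,y)" by (cases q)
      have xy: "x \<in> S" "y \<in> T - S" "q = (x,y)" "(x < y) \<noteq> (g x < g y)"
        using q qxy unfolding Q_def A_def C_def by auto
      have "x \<noteq> y" using xy by auto
      have "g x \<noteq> g y" using xy ig sub by (metis Diff_iff inj_onD subsetD)
      show "q \<in> \<psi> ` M"
      proof (cases "x < y")
        case True
        then have "(x,y) \<in> M" "q = \<psi> (x,y)" using xy sub \<open>g x \<noteq> g y\<close> unfolding M_def \<psi>_def by auto
        then show ?thesis by blast
      next
        case False
        then have "y < x" using \<open>x \<noteq> y\<close> by auto
        then have "(y,x) \<in> M" "q = \<psi> (y,x)" using xy sub \<open>g x \<noteq> g y\<close> False unfolding M_def \<psi>_def by auto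
        then show ?thesis by blast
      qed
    qed
    then show ?thesis using card_image[OF inj] by simp
  qed
  have cA: "card {p\<in>Q. A p} = crs T S"
    unfolding crs_def Q_def A_def by (rule arg_cong[where f=card]) auto
  have cC: "card {p\<in>Q. C p} = crs (g`T) (g`S)"
  proof -
    define \<chi> where "\<chi> = (\<lambda>p::'a\<times>'a. (g (fst p), g (snd p)))"
    have inj: "inj_on \<chi> {p\<in>Q. C p}"
    proof (rule inj_onI)
      fix p p' assume a: "p \<in> {p\<in>Q. C p}" "p' \<in> {p\<in>Q. C p}" "\<chi> p = \<chi> p'"
      then have "fst p \<in> T" "snd p \<in> T" "fst p' \<in> T" "snd p' \<in> T" using sub unfolding Q_def by auto
      moreover have "g (fst p) = g (fst p')" "g (snd p) = g (snd p')" using a(3) unfolding \<chi>_def by auto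
      ultimately have "fst p = fst p'" "snd p = snd p'" using ig by (meson inj_onD)+
      then show "p = p'" by (simp add: prod_eq_iff)
    qed
    have gd: "g`T - g`S = g`(T-S)" using ig sub by (simp add: inj_on_image_set_diff)
    have "\<chi> ` {p\<in>Q. C p} = {(x,y). x\<in>g`S \<and> y\<in>g`T-g`S \<and> x<y}"
      unfolding gd by (auto simp: \<chi>_def Q_def C_def image_iff) blast
    then show ?thesis unfolding crs_def using card_image[OF inj] by simp
  qed
  have "invs g T + invs g S + invs g (T-S) + crs T S + crs (g`T) (g`S) =
     2 * (card IS + card IC + card {p\<in>Q. A p \<noteq> C p} + card {p\<in>Q. A p \<and> C p})"
    using xor_card[OF fQ, of A C] c1 c2 c3 cM cA cC by simp
  then show ?thesis by simp
qed

lemma adj_arith: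
  fixes a b c d i :: nat
  assumes "a<b" "c<d" "a < c \<or> (a = c \<and> b < d)"
    "min (st c) (st d) < min (st a) (st b) \<or> (min (st c) (st d) = min (st a) (st b) \<and> max (st c) (st d) < max (st a) (st b))"
   and "\<And>x. st x = (if x = i then Suc i else if x = Suc i then i else x)"
  shows "(c = a \<and> b = i \<and> d = Suc i) \<or> (a = i \<and> c = Suc i \<and> Suc i < b \<and> Suc i < d)"
proof -
  have "st a = (if a = i then Suc i else if a = Suc i then i else a)"
       "st b = (if b = i then Suc i else if b = Suc i then i else b)"
       "st c = (if c = i then Suc i else if c = Suc i then i else c)"
       "st d = (if d = i then Suc i else if d = Suc i then i else d)" using assms(5) by blast+
  then show ?thesis using assms(1-4) unfolding min_def max_def by (simp split: if_splits; linarith)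
qed

lemma edge_act_mm: "edge_act \<sigma> (a,b) = (min (\<sigma> a) (\<sigma> b), max (\<sigma> a) (\<sigma> b))"
  unfolding edge_act_def by (auto simp: min_def max_def)

lemma lex_less_eq: "lex_less = (<)"
  unfolding lex_less_def by (auto simp: fun_eq_iff less_prod_def)

lemma inv_count_invs: "inv_count \<sigma> E = invs (edge_act \<sigma>) E"
  unfolding inv_count_def invs_def lex_less_eq ..

lemma adj_set:
  fixes i n :: nat
  assumes "1 \<le> i" "Suc i \<le> n"
  shows "{(x,y). x\<in>edges n \<and> y\<in>edges n \<and> x<y \<and> edge_act (Transposition.transpose i (Suc i)) y < edge_act (Transposition.transpose i (Suc i)) x} =
     (\<lambda>a. ((a,i),(a,Suc i)))`{1..<i} \<union> (\<lambda>(b,d). ((i,b),(Suc i,d)))`({Suc(Suc i)..n}\<times>{Suc(Suc i)..n})"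
    (is "?L = ?R")
proof (rule set_eqI, rule iffI)
  let ?st = "Transposition.transpose i (Suc i)"
  have st: "\<And>x. ?st x = (if x = i then Suc i else if x = Suc i then i else x)"
    by (auto simp: Transposition.transpose_def)
  fix p assume "p \<in> ?L"
  then obtain a b c d where p: "p = ((a,b),(c,d))" "1 \<le> a" "a < b" "b \<le> n" "1 \<le> c" "c < d" "d \<le> n"
     "(a,b) < (c,d)" "edge_act ?st (c,d) < edge_act ?st (a,b)"
    unfolding edges_def by auto
  have "(c = a \<and> b = i \<and> d = Suc i) \<or> (a = i \<and> c = Suc i \<and> Suc i < b \<and> Suc i < d)"
    apply (rule adj_arith[where st = ?st, OF _ _ _ _ st])
    using p(3,6,8,9) unfolding edge_act_mm by auto
  then show "p \<in> ?R" using p by auto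
next
  fix p assume "p \<in> ?R"
  then show "p \<in> ?L"
    using assms by (auto simp: edge_act_mm Transposition.transpose_def edges_def)
qed

lemma adj_card:
  fixes i n :: nat
  assumes "1 \<le> i" "Suc i \<le> n"
  shows "even (inv_count (Transposition.transpose i (Suc i)) (edges n) + n)"
proof -
  let ?A = "(\<lambda>a. ((a,i),(a,Suc i)))`{1..<i}"
  let ?B = "(\<lambda>(b,d). ((i,b),(Suc i,d)))`({Suc(Suc i)..n}\<times>{Suc(Suc i)..n})"
  have cA: "card ?A = i - 1" by (subst card_image) (auto simp: inj_on_def)
  have cB: "card ?B = (n - Suc i) * (n - Suc i)" by (subst card_image) (auto simp: inj_on_def)
  have "card (?A \<union> ?B) = card ?A + card ?B" by (rule card_Un_disjoint) auto
  then have "inv_count (Transposition.transpose i (Suc i)) (edges n) = (i - 1) + (n - Suc i) * (n - Suc i)"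
    unfolding inv_count_invs invs_def adj_set[OF assms] cA cB by simp
  moreover have "even ((i - 1) + (n - Suc i) * (n - Suc i) + n)"
  proof -
    define m where "m = n - Suc i"
    have eq: "(i - 1) + m * m + n = (m * m + m) + 2 * i" using assms m_def by simp
    have "even ((m * m + m) + 2 * i)" by simp
    then have "even ((i - 1) + m * m + n)" using eq by metis
    then show ?thesis unfolding m_def .
  qed
  ultimately show ?thesis by simp
qed

definition eps :: "(nat \<Rightarrow> nat) \<Rightarrow> grph \<Rightarrow> rat" where
  "eps \<sigma> X = (-1::rat) ^ inv_count \<sigma> X"

definition tt :: "nat \<Rightarrow> grph \<Rightarrow> rat" where
  "tt n S = (-1::rat) ^ crs (edges n) S"

lemma par3: "even (a + b + c) \<Longrightarrow> (-1::rat) ^ a = (-1) ^ b * (-1) ^ c"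
  by (cases "even a"; cases "even b"; cases "even c") auto

lemma par5: "even (a + b + c + d + e) \<Longrightarrow> (-1::rat) ^ a = (-1) ^ b * (-1) ^ c * (-1) ^ d * (-1) ^ e"
  by (cases "even a"; cases "even b"; cases "even c"; cases "even d"; cases "even e") auto

lemma pm1_sq: "((-1::rat) ^ k) * ((-1) ^ k) = 1"
  by (simp add: power_mult_distrib[symmetric])

lemma eps_sq: "eps \<sigma> X * eps \<sigma> X = 1"
  unfolding eps_def by (rule pm1_sq)

lemma tt_sq: "tt n X * tt n X = 1"
  unfolding tt_def by (rule pm1_sq)

lemma fin_edges: "finite (edges n)"
  by (rule finite_subset[of _ "{1..n}\<times>{1..n}"]) (auto simp: edges_def)

lemma perms_permutes: "\<sigma> \<in> perms n \<Longrightarrow> \<sigma> permutes {1..n}"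
  by (simp add: perms_def)

lemma perms_in: "\<sigma> \<in> perms n \<Longrightarrow> (\<sigma> x \<in> {1..n}) = (x \<in> {1..n})"
  unfolding perms_def by (metis mem_Collect_eq permutes_in_image)

lemma perms_inj: "\<sigma> \<in> perms n \<Longrightarrow> \<sigma> x = \<sigma> y \<Longrightarrow> x = y"
  by (meson perms_permutes permutes_inj injD)

lemma edge_act_in: "\<sigma> \<in> perms n \<Longrightarrow> e \<in> edges n \<Longrightarrow> edge_act \<sigma> e \<in> edges n"
proof -
  assume s: "\<sigma> \<in> perms n" and e: "e \<in> edges n"
  obtain a b where ab: "e = (a,b)" "1 \<le> a" "a < b" "b \<le> n" using e by (auto simp: edges_def)
  have "\<sigma> a \<in> {1..n}" "\<sigma> b \<in> {1..n}" using perms_in[OF s] ab by auto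
  moreover have "\<sigma> a \<noteq> \<sigma> b" using perms_inj[OF s] ab by force
  ultimately show ?thesis using ab by (auto simp: edge_act_mm edges_def min_def max_def)
qed

lemma edge_act_inj: "\<sigma> \<in> perms n \<Longrightarrow> inj_on (edge_act \<sigma>) (edges n)"
proof (rule inj_onI)
  fix e e' assume s: "\<sigma> \<in> perms n" and e: "e \<in> edges n" "e' \<in> edges n" and eq: "edge_act \<sigma> e = edge_act \<sigma> e'"
  obtain a b where ab: "e = (a,b)" "a < b" using e by (auto simp: edges_def)
  obtain c d where cd: "e' = (c,d)" "c < d" using e by (auto simp: edges_def)
  have "\<sigma> a \<noteq> \<sigma> b" using perms_inj[OF s] ab by force
  have "\<sigma> c \<noteq> \<sigma> d" using perms_inj[OF s] cd by force
  have "(\<sigma> a = \<sigma> c \<and> \<sigma> b = \<sigma> d) \<or> (\<sigma> a = \<sigma> d \<and> \<sigma> b = \<sigma> c)"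
    using eq ab cd \<open>\<sigma> a \<noteq> \<sigma> b\<close> \<open>\<sigma> c \<noteq> \<sigma> d\<close> by (auto simp: edge_act_mm min_def max_def split: if_splits)
  then have "(a = c \<and> b = d) \<or> (a = d \<and> b = c)" using perms_inj[OF s] by blast
  then show "e = e'" using ab cd by auto
qed

lemma edge_act_image: "\<sigma> \<in> perms n \<Longrightarrow> edge_act \<sigma> ` edges n = edges n"
proof -
  assume s: "\<sigma> \<in> perms n"
  show ?thesis by (rule endo_inj_surj[OF fin_edges]) (use edge_act_in[OF s] edge_act_inj[OF s] in blast)+
qed

lemma edge_act_comp: "edge_act (\<sigma> \<circ> \<tau>) e = edge_act \<sigma> (edge_act \<tau> e)"
proof (cases e)
  case (Pair a b)
  then show ?thesis by (cases "\<tau> a \<le> \<tau> b") (simp_all add: edge_act_mm min_def max_def)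
qed

lemma edge_act_comp_fun: "edge_act (\<sigma> \<circ> \<tau>) = edge_act \<sigma> \<circ> edge_act \<tau>"
  by (simp add: fun_eq_iff edge_act_comp)

lemma edge_act_id: "e \<in> edges n \<Longrightarrow> edge_act id e = e"
  by (auto simp: edge_act_def edges_def)

lemma perms_comp: "\<sigma> \<in> perms n \<Longrightarrow> \<tau> \<in> perms n \<Longrightarrow> \<sigma> \<circ> \<tau> \<in> perms n"
  by (simp add: perms_def permutes_compose)

lemma perms_inv: "\<sigma> \<in> perms n \<Longrightarrow> inv \<sigma> \<in> perms n"
  by (simp add: perms_def permutes_inv)

lemma perms_id: "id \<in> perms n"
  by (simp add: perms_def permutes_id)

lemma perms_inv_comp: "\<sigma> \<in> perms n \<Longrightarrow> inv \<sigma> \<circ> \<sigma> = id" "\<sigma> \<in> perms n \<Longrightarrow> \<sigma> \<circ> inv \<sigma> = id"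
  by (auto simp: perms_def permutes_inv_o)

lemma edge_act_inv_image: "\<sigma> \<in> perms n \<Longrightarrow> X \<subseteq> edges n \<Longrightarrow> edge_act (inv \<sigma>) ` edge_act \<sigma> ` X = X"
proof -
  assume s: "\<sigma> \<in> perms n" and X: "X \<subseteq> edges n"
  have "edge_act (inv \<sigma>) ` edge_act \<sigma> ` X = edge_act (inv \<sigma> \<circ> \<sigma>) ` X"
    by (simp add: edge_act_comp_fun image_comp)
  also have "\<dots> = edge_act id ` X" by (simp add: perms_inv_comp[OF s])
  also have "\<dots> = id ` X" by (rule image_cong) (use X edge_act_id in auto)
  finally show ?thesis by simp
qed

lemma edge_act_inv_image2: "\<sigma> \<in> perms n \<Longrightarrow> X \<subseteq> edges n \<Longrightarrow> edge_act \<sigma> ` edge_act (inv \<sigma>) ` X = X"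
proof -
  assume s: "\<sigma> \<in> perms n" and X: "X \<subseteq> edges n"
  have "edge_act \<sigma> ` edge_act (inv \<sigma>) ` X = edge_act (\<sigma> \<circ> inv \<sigma>) ` X"
    by (simp add: edge_act_comp_fun image_comp)
  also have "\<dots> = edge_act id ` X" by (simp add: perms_inv_comp[OF s])
  also have "\<dots> = id ` X" by (rule image_cong) (use X edge_act_id in auto)
  finally show ?thesis by simp
qed

lemma edge_act_sub: "\<sigma> \<in> perms n \<Longrightarrow> X \<subseteq> edges n \<Longrightarrow> edge_act \<sigma> ` X \<subseteq> edges n"
  using edge_act_in by blast

lemma edge_act_diff: "\<sigma> \<in> perms n \<Longrightarrow> X \<subseteq> edges n \<Longrightarrow> edge_act \<sigma> ` (edges n - X) = edges n - edge_act \<sigma> ` X"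
proof -
  assume s: "\<sigma> \<in> perms n" and X: "X \<subseteq> edges n"
  have "edge_act \<sigma> ` (edges n - X) = edge_act \<sigma> ` edges n - edge_act \<sigma> ` X"
    by (rule inj_on_image_set_diff[OF edge_act_inj[OF s]]) (use X in auto)
  then show ?thesis using edge_act_image[OF s] by simp
qed

lemma edge_act_img_inj: "\<sigma> \<in> perms n \<Longrightarrow> X \<subseteq> edges n \<Longrightarrow> Y \<subseteq> edges n \<Longrightarrow>
   edge_act \<sigma> ` X = edge_act \<sigma> ` Y \<Longrightarrow> X = Y"
  using inj_on_image_eq_iff[OF edge_act_inj] by blast

lemma eps_comp:
  assumes s: "\<sigma> \<in> perms n" and t: "\<tau> \<in> perms n" and X: "X \<subseteq> edges n"
  shows "eps (\<sigma> \<circ> \<tau>) X = eps \<sigma> (edge_act \<tau> ` X) * eps \<tau> X"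
proof -
  have "even (invs (edge_act \<sigma> \<circ> edge_act \<tau>) X + invs (edge_act \<tau>) X + invs (edge_act \<sigma>) (edge_act \<tau> ` X))"
    apply (rule invs_comp)
    using X fin_edges finite_subset apply blast
    using edge_act_inj[OF t] X inj_on_subset apply blast
    using edge_act_inj[OF s] edge_act_sub[OF t X] inj_on_subset by blast
  then have "(-1::rat) ^ invs (edge_act \<sigma> \<circ> edge_act \<tau>) X = (-1) ^ invs (edge_act \<tau>) X * (-1) ^ invs (edge_act \<sigma>) (edge_act \<tau> ` X)"
    by (rule par3)
  then show ?thesis unfolding eps_def inv_count_invs edge_act_comp_fun by (simp add: mult.commute)
qed

lemma eps_split:
  assumes s: "\<sigma> \<in> perms n" and S: "S \<subseteq> edges n"
  shows "eps \<sigma> (edges n) = eps \<sigma> S * eps \<sigma> (edges n - S) * tt n S * tt n (edge_act \<sigma> ` S)"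
proof -
  have "even (invs (edge_act \<sigma>) (edges n) + invs (edge_act \<sigma>) S + invs (edge_act \<sigma>) (edges n - S)
     + crs (edges n) S + crs (edge_act \<sigma> ` edges n) (edge_act \<sigma> ` S))"
    by (rule invs_split[OF fin_edges S edge_act_inj[OF s]])
  then show ?thesis unfolding eps_def tt_def inv_count_invs edge_act_image[OF s]
    by (rule par5)
qed

lemma eps_id: "eps id (edges n) = 1"
proof -
  have "inv_count id (edges n) = 0"
  proof -
    have "{(x,y). x\<in>edges n \<and> y\<in>edges n \<and> x<y \<and> edge_act id y < edge_act id x} = {}"
    proof (rule equals0I)
      fix p assume "p \<in> {(x,y). x\<in>edges n \<and> y\<in>edges n \<and> x<y \<and> edge_act id y < edge_act id x}"
      then obtain x y where "x \<in> edges n" "y \<in> edges n" "x < y" "edge_act id y < edge_act id x" by blast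
      then show False using edge_act_id[of x n] edge_act_id[of y n] by simp
    qed
    then show ?thesis unfolding inv_count_invs invs_def by (simp only: card.empty)
  qed
  then show ?thesis by (simp add: eps_def)
qed

lemma transp_perms: "a \<in> {1..n} \<Longrightarrow> b \<in> {1..n} \<Longrightarrow> Transposition.transpose a b \<in> perms n"
  by (simp add: perms_def permutes_swap_id)

lemma eps_adj: "1 \<le> i \<Longrightarrow> Suc i \<le> n \<Longrightarrow> eps (Transposition.transpose i (Suc i)) (edges n) = (-1) ^ n"
proof -
  assume "1 \<le> i" "Suc i \<le> n"
  then have "even (inv_count (Transposition.transpose i (Suc i)) (edges n) + n + 0)" using adj_card by simp
  then have "(-1::rat) ^ inv_count (Transposition.transpose i (Suc i)) (edges n) = (-1) ^ n * (-1) ^ 0" by (rule par3)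
  then show ?thesis unfolding eps_def by simp
qed

lemma eps_T_mult: "\<sigma> \<in> perms n \<Longrightarrow> \<tau> \<in> perms n \<Longrightarrow> eps (\<sigma> \<circ> \<tau>) (edges n) = eps \<sigma> (edges n) * eps \<tau> (edges n)"
  using eps_comp[of \<sigma> n \<tau> "edges n"] edge_act_image[of \<tau> n] by simp

lemma eps_transp:
  assumes "a \<in> {1..n}" "b \<in> {1..n}" "a \<noteq> b"
  shows "eps (Transposition.transpose a b) (edges n) = (-1) ^ n"
proof -
  have main: "eps (Transposition.transpose a b) (edges n) = (-1) ^ n" if ab: "a \<in> {1..n}" "b \<in> {1..n}" "a < b" for a b
  proof -
    let ?c = "Transposition.transpose (Suc a) b"
    let ?s = "Transposition.transpose a (Suc a)"
    have eq: "Transposition.transpose a b = ?c \<circ> ?s \<circ> ?c"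
      using ab by (simp add: Transposition.transpose_def fun_eq_iff)
    have c: "?c \<in> perms n" using ab by (intro transp_perms) auto
    have s: "?s \<in> perms n" using ab by (intro transp_perms) auto
    have "eps (?c \<circ> ?s \<circ> ?c) (edges n) = eps ?c (edges n) * eps ?s (edges n) * eps ?c (edges n)"
      using eps_T_mult[OF perms_comp[OF c s] c] eps_T_mult[OF c s] by simp
    also have "\<dots> = eps ?s (edges n)" using eps_sq[of ?c "edges n"] by (simp add: algebra_simps)
    also have "\<dots> = (-1) ^ n" using ab by (intro eps_adj) auto
    finally show ?thesis using eq by simp
  qed
  show ?thesis
  proof (cases "a < b")
    case True then show ?thesis using main assms by blast
  next
    case False then have "b < a" using assms by auto
    then show ?thesis using main[of b a] assms by (simp add: transpose_commute)
  qed
qed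

lemma eps_T: "\<sigma> \<in> perms n \<Longrightarrow> eps \<sigma> (edges n) = of_int (sign \<sigma>) ^ n"
proof -
  assume "\<sigma> \<in> perms n"
  then have p: "\<sigma> permutes {1..n}" by (simp add: perms_def)
  show ?thesis using p finite_atLeastAtMost
  proof (induction rule: permutes_induct)
    case id then show ?case using eps_id[of n] by (simp add: id_def)
  next
    case (swap a b p)
    have pp: "p \<in> perms n" using swap by (simp add: perms_def)
    have tp: "Transposition.transpose a b \<in> perms n" using swap by (intro transp_perms)
    have "eps (Transposition.transpose a b \<circ> p) (edges n) = (-1)^n * of_int (sign p) ^ n"
      using eps_T_mult[OF tp pp] eps_transp[OF swap(1,2,3)] swap by simp
    moreover have "sign (Transposition.transpose a b \<circ> p) = - sign p"
    proof -
      have "permutation p" using permutes_imp_permutation[OF finite_atLeastAtMost swap(4)] .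
      then show ?thesis using swap(3) by (simp add: sign_compose permutation_swap_id sign_swap_id)
    qed
    ultimately have "eps (Transposition.transpose a b \<circ> p) (edges n) = of_int (sign (Transposition.transpose a b \<circ> p)) ^ n"
      by (simp add: power_mult_distrib[symmetric])
    then show ?case by (simp add: comp_def)
  qed
qed

lemma card_edges: "card (edges n) = n * (n - 1) div 2"
proof (induction n)
  case 0
  have "edges 0 = {}" by (auto simp: edges_def)
  then show ?case by simp
next
  case (Suc n)
  have "edges (Suc n) = edges n \<union> (\<lambda>i. (i, Suc n)) ` {1..n}"
    by (auto simp: edges_def)
  moreover have "card (edges n \<union> (\<lambda>i. (i, Suc n)) ` {1..n}) = card (edges n) + n"
    by (subst card_Un_disjoint) (use fin_edges[of n] in \<open>auto simp: edges_def card_image inj_on_def\<close>)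
  ultimately have "card (edges (Suc n)) = n * (n - 1) div 2 + n" using Suc by simp
  also have "\<dots> = Suc n * (Suc n - 1) div 2"
  proof (cases n)
    case 0 then show ?thesis by simp
  next
    case (Suc m)
    have "n * (n - 1) div 2 + n = (n * (n - 1) + 2 * n) div 2" by simp
    also have "n * (n - 1) + 2 * n = Suc n * n" using Suc by (simp add: algebra_simps)
    finally show ?thesis by simp
  qed
  finally show ?case .
qed

lemma id_img: "X \<subseteq> edges n \<Longrightarrow> edge_act id ` X = X"
proof -
  assume X: "X \<subseteq> edges n"
  have "edge_act id ` X = id ` X" by (rule image_cong) (use X edge_act_id in auto)
  then show ?thesis by simp
qed

lemma giso_refl: "X \<subseteq> edges n \<Longrightarrow> graph_iso n X X"
  unfolding graph_iso_def using perms_id[of n] id_img by blast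

lemma giso_sym: "X \<subseteq> edges n \<Longrightarrow> graph_iso n X Y \<Longrightarrow> graph_iso n Y X"
  unfolding graph_iso_def using perms_inv edge_act_inv_image by blast

lemma giso_trans: "graph_iso n X Y \<Longrightarrow> graph_iso n Y Z \<Longrightarrow> graph_iso n X Z"
proof -
  assume "graph_iso n X Y" "graph_iso n Y Z"
  then obtain \<sigma> \<tau> where st: "\<sigma> \<in> perms n" "edge_act \<sigma> ` X = Y" "\<tau> \<in> perms n" "edge_act \<tau> ` Y = Z"
    unfolding graph_iso_def by blast
  have "edge_act (\<tau> \<circ> \<sigma>) ` X = edge_act \<tau> ` (edge_act \<sigma> ` X)" by (simp add: edge_act_comp image_image)
  then have "edge_act (\<tau> \<circ> \<sigma>) ` X = Z" using st by simp
  then show ?thesis unfolding graph_iso_def using perms_comp[OF st(3,1)] by blast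
qed

lemma giso_sub: "X \<subseteq> edges n \<Longrightarrow> graph_iso n X Y \<Longrightarrow> Y \<subseteq> edges n"
  unfolding graph_iso_def using edge_act_sub by blast

lemma giso_compl: "X \<subseteq> edges n \<Longrightarrow> graph_iso n X Y \<Longrightarrow> graph_iso n (edges n - X) (edges n - Y)"
  unfolding graph_iso_def using edge_act_diff by blast

lemma giso_img: "\<sigma> \<in> perms n \<Longrightarrow> graph_iso n X (edge_act \<sigma> ` X)"
  unfolding graph_iso_def by blast

lemma rep_sub: "rep_choice n rep \<Longrightarrow> X \<subseteq> edges n \<Longrightarrow> rep X \<subseteq> edges n"
  unfolding rep_choice_def by blast

lemma rep_iso: "rep_choice n rep \<Longrightarrow> X \<subseteq> edges n \<Longrightarrow> graph_iso n X (rep X)"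
  unfolding rep_choice_def by blast

lemma rep_eq: "rep_choice n rep \<Longrightarrow> X \<subseteq> edges n \<Longrightarrow> graph_iso n X Y \<Longrightarrow> rep Y = rep X"
proof -
  assume rc: "rep_choice n rep" and X: "X \<subseteq> edges n" and i: "graph_iso n X Y"
  have "Y \<subseteq> edges n" using giso_sub[OF X i] .
  then show ?thesis using rc X i unfolding rep_choice_def by (metis (no_types))
qed

definition act_gen :: "nat \<Rightarrow> ((nat \<Rightarrow> nat) \<Rightarrow> rat) \<Rightarrow> (nat \<Rightarrow> nat) \<Rightarrow> ext \<Rightarrow> ext" where
  "act_gen n s \<sigma> v = (\<lambda>S. s \<sigma> * act n \<sigma> v S)"

lemma act_img:
  assumes s: "\<sigma> \<in> perms n" and Y: "Y \<subseteq> edges n"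
  shows "act n \<sigma> v (edge_act \<sigma> ` Y) = eps \<sigma> Y * v Y"
proof -
  have "act n \<sigma> v (edge_act \<sigma> ` Y) = (\<Sum>E\<in>Pow (edges n). if E = Y then eps \<sigma> E * v E else 0)"
    unfolding act_def eps_def
  proof (rule sum.cong[OF refl])
    fix E assume "E \<in> Pow (edges n)"
    then have "(edge_act \<sigma> ` E = edge_act \<sigma> ` Y) = (E = Y)" using edge_act_img_inj[OF s _ Y] by blast
    then show "(if edge_act \<sigma> ` E = edge_act \<sigma> ` Y then (-1) ^ inv_count \<sigma> E * v E else 0) =
          (if E = Y then (-1) ^ inv_count \<sigma> E * v E else 0)" by simp
  qed
  also have "\<dots> = eps \<sigma> Y * v Y" using Y fin_edges[of n] by (simp add: sum.delta)
  finally show ?thesis .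
qed

lemma act_out:
  assumes s: "\<sigma> \<in> perms n" and S: "\<not> S \<subseteq> edges n"
  shows "act n \<sigma> v S = 0"
  unfolding act_def
proof (rule sum.neutral, rule ballI)
  fix E assume "E \<in> Pow (edges n)"
  then have "edge_act \<sigma> ` E \<noteq> S" using edge_act_sub[OF s] S by blast
  then show "(if edge_act \<sigma> ` E = S then (-1) ^ inv_count \<sigma> E * v E else 0) = 0" by simp
qed

lemma act_mu:
  assumes R: "R \<subseteq> edges n"
  shows "act n \<sigma> (mu R) S = (if edge_act \<sigma> ` R = S then eps \<sigma> R else 0)"
proof -
  have "act n \<sigma> (mu R) S = (\<Sum>E\<in>Pow (edges n). if E = R then (if edge_act \<sigma> ` R = S then eps \<sigma> R else 0) else 0)"
    unfolding act_def by (rule sum.cong[OF refl]) (auto simp: mu_def eps_def)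
  also have "\<dots> = (if edge_act \<sigma> ` R = S then eps \<sigma> R else 0)" using R fin_edges[of n] by (simp add: sum.delta)
  finally show ?thesis .
qed

definition supp_ok :: "nat \<Rightarrow> ext \<Rightarrow> bool" where
  "supp_ok n v = (\<forall>S. v S \<noteq> 0 \<longrightarrow> S \<subseteq> edges n)"

lemma ext_deg_supp: "v \<in> ext_deg n r \<Longrightarrow> supp_ok n v"
  unfolding ext_deg_def supp_ok_def by blast

lemma act_gen_fix:
  assumes s: "\<sigma> \<in> perms n" and v: "supp_ok n v"
  shows "(act_gen n f \<sigma> v = v) = (\<forall>Y. Y \<subseteq> edges n \<longrightarrow> v (edge_act \<sigma> ` Y) = f \<sigma> * eps \<sigma> Y * v Y)"
proof
  assume a: "act_gen n f \<sigma> v = v"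
  show "\<forall>Y. Y \<subseteq> edges n \<longrightarrow> v (edge_act \<sigma> ` Y) = f \<sigma> * eps \<sigma> Y * v Y"
  proof (intro allI impI)
    fix Y assume Y: "Y \<subseteq> edges n"
    have "v (edge_act \<sigma> ` Y) = act_gen n f \<sigma> v (edge_act \<sigma> ` Y)" using a by simp
    also have "\<dots> = f \<sigma> * eps \<sigma> Y * v Y" unfolding act_gen_def using act_img[OF s Y] by simp
    finally show "v (edge_act \<sigma> ` Y) = f \<sigma> * eps \<sigma> Y * v Y" .
  qed
next
  assume a: "\<forall>Y. Y \<subseteq> edges n \<longrightarrow> v (edge_act \<sigma> ` Y) = f \<sigma> * eps \<sigma> Y * v Y"
  show "act_gen n f \<sigma> v = v"
  proof
    fix S
    show "act_gen n f \<sigma> v S = v S"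
    proof (cases "S \<subseteq> edges n")
      case True
      define Y where "Y = edge_act (inv \<sigma>) ` S"
      have Y: "Y \<subseteq> edges n" unfolding Y_def using edge_act_sub[OF perms_inv[OF s] True] .
      have SY: "S = edge_act \<sigma> ` Y" unfolding Y_def using edge_act_inv_image2[OF s True] by simp
      show ?thesis unfolding act_gen_def SY act_img[OF s Y] using a Y by simp
    next
      case False
      then have "v S = 0" using v unfolding supp_ok_def by blast
      then show ?thesis unfolding act_gen_def using act_out[OF s False] by simp
    qed
  qed
qed

definition invp :: "nat \<Rightarrow> ((nat \<Rightarrow> nat) \<Rightarrow> rat) \<Rightarrow> ext \<Rightarrow> bool" where
  "invp n f v = (\<forall>\<sigma>\<in>perms n. \<forall>Y. Y \<subseteq> edges n \<longrightarrow> v (edge_act \<sigma> ` Y) = f \<sigma> * eps \<sigma> Y * v Y)"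

lemma invp_iff: "v \<in> ext_deg n r \<Longrightarrow> (\<forall>\<sigma>\<in>perms n. act_gen n f \<sigma> v = v) = invp n f v"
proof -
  assume v: "v \<in> ext_deg n r"
  have "\<And>\<sigma>. \<sigma> \<in> perms n \<Longrightarrow> (act_gen n f \<sigma> v = v) = (\<forall>Y. Y \<subseteq> edges n \<longrightarrow> v (edge_act \<sigma> ` Y) = f \<sigma> * eps \<sigma> Y * v Y)"
    by (rule act_gen_fix[OF _ ext_deg_supp[OF v]])
  then show ?thesis unfolding invp_def by (simp only: Ball_def) (meson)
qed

lemma H_eq: "H n r = {v \<in> ext_deg n r. invp n (\<lambda>_. 1) v}"
proof -
  have e: "act n \<sigma> v = act_gen n (\<lambda>_. 1) \<sigma> v" for v \<sigma> unfolding act_gen_def by simp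
  show ?thesis unfolding H_def e using invp_iff by blast
qed

lemma Hsgn_eq: "Hsgn n r = {v \<in> ext_deg n r. invp n (\<lambda>\<sigma>. of_int (sign \<sigma>)) v}"
proof -
  have e: "act_sgn n \<sigma> v = act_gen n (\<lambda>\<sigma>. of_int (sign \<sigma>)) \<sigma> v" for v \<sigma> unfolding act_gen_def act_sgn_def by simp
  show ?thesis unfolding Hsgn_def e using invp_iff by blast
qed

definition alpha_g :: "nat \<Rightarrow> ((nat \<Rightarrow> nat) \<Rightarrow> rat) \<Rightarrow> grph \<Rightarrow> ext" where
  "alpha_g n f R = (\<lambda>S. (1 / of_nat (card (stab n R))) * (\<Sum>\<sigma>\<in>perms n. act_gen n f \<sigma> (mu R) S))"

lemma alpha_eq: "alpha n R = alpha_g n (\<lambda>_. 1) R"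
  unfolding alpha_def alpha_g_def act_gen_def by simp

lemma alpha_sgn_eq: "alpha_sgn n R = alpha_g n (\<lambda>\<sigma>. of_int (sign \<sigma>)) R"
  unfolding alpha_sgn_def alpha_g_def act_gen_def act_sgn_def by simp

lemma fin_perms: "finite (perms n)"
  unfolding perms_def by (rule finite_permutations) simp

lemma alpha_g_val:
  assumes R: "R \<subseteq> edges n"
  shows "alpha_g n f R S = (1 / of_nat (card (stab n R))) *
           (\<Sum>\<sigma>\<in>perms n. if edge_act \<sigma> ` R = S then f \<sigma> * eps \<sigma> R else 0)"
  unfolding alpha_g_def act_gen_def act_mu[OF R] by (simp add: if_distrib cong: if_cong)

definition chr :: "nat \<Rightarrow> ((nat \<Rightarrow> nat) \<Rightarrow> rat) \<Rightarrow> bool" where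
  "chr n f = ((\<forall>\<sigma>\<in>perms n. f \<sigma> * f \<sigma> = 1) \<and> (\<forall>\<sigma>\<in>perms n. \<forall>\<tau>\<in>perms n. f (\<sigma> \<circ> \<tau>) = f \<sigma> * f \<tau>))"

lemma chr_one: "chr n (\<lambda>_. 1)"
  unfolding chr_def by simp

lemma perms_permutation: "\<sigma> \<in> perms n \<Longrightarrow> permutation \<sigma>"
  unfolding perms_def using permutes_imp_permutation[OF finite_atLeastAtMost] by blast

lemma chr_sgn: "chr n (\<lambda>\<sigma>. of_int (sign \<sigma>))"
  unfolding chr_def
proof (intro conjI ballI)
  fix \<sigma> assume "\<sigma> \<in> perms n"
  show "rat_of_int (sign \<sigma>) * rat_of_int (sign \<sigma>) = 1"
    by (metis of_int_1 of_int_mult sign_idempotent)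
next
  fix \<sigma> \<tau> assume "\<sigma> \<in> perms n" "\<tau> \<in> perms n"
  then show "rat_of_int (sign (\<sigma> \<circ> \<tau>)) = rat_of_int (sign \<sigma>) * rat_of_int (sign \<tau>)"
    by (simp add: sign_compose perms_permutation)
qed

lemma stab_card:
  assumes p: "\<pi> \<in> perms n" and X: "X \<subseteq> edges n"
  shows "card (stab n (edge_act \<pi> ` X)) = card (stab n X)"
proof -
  have i1: "inv \<pi> \<circ> \<pi> = id" and i2: "\<pi> \<circ> inv \<pi> = id" using perms_inv_comp[OF p] by auto
  have ip: "inv \<pi> \<in> perms n" using perms_inv[OF p] .
  have img: "edge_act (a \<circ> b \<circ> c) ` Y = edge_act a ` edge_act b ` edge_act c ` Y" for a b c Y
    by (simp add: edge_act_comp image_image)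
  have PX: "edge_act \<pi> ` X \<subseteq> edges n" using edge_act_sub[OF p X] .
  have "bij_betw (\<lambda>\<tau>. inv \<pi> \<circ> \<tau> \<circ> \<pi>) (stab n (edge_act \<pi> ` X)) (stab n X)"
  proof (rule bij_betw_byWitness[where f' = "\<lambda>\<tau>. \<pi> \<circ> \<tau> \<circ> inv \<pi>"])
    show "\<forall>a\<in>stab n (edge_act \<pi> ` X). \<pi> \<circ> (inv \<pi> \<circ> a \<circ> \<pi>) \<circ> inv \<pi> = a"
      using i1 i2 by (simp add: o_assoc) (metis comp_id o_assoc)
    show "\<forall>a\<in>stab n X. inv \<pi> \<circ> (\<pi> \<circ> a \<circ> inv \<pi>) \<circ> \<pi> = a"
      using i1 i2 by (simp add: o_assoc) (metis comp_id o_assoc)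
    show "(\<lambda>\<tau>. inv \<pi> \<circ> \<tau> \<circ> \<pi>) ` stab n (edge_act \<pi> ` X) \<subseteq> stab n X"
    proof
      fix y assume "y \<in> (\<lambda>\<tau>. inv \<pi> \<circ> \<tau> \<circ> \<pi>) ` stab n (edge_act \<pi> ` X)"
      then obtain \<tau> where t: "\<tau> \<in> perms n" "edge_act \<tau> ` edge_act \<pi> ` X = edge_act \<pi> ` X" "y = inv \<pi> \<circ> \<tau> \<circ> \<pi>"
        unfolding stab_def by blast
      have "y \<in> perms n" using t perms_comp ip p by simp
      moreover have "edge_act y ` X = X" unfolding t(3) img t(2) using edge_act_inv_image[OF p X] .
      ultimately show "y \<in> stab n X" unfolding stab_def by blast
    qed
    show "(\<lambda>\<tau>. \<pi> \<circ> \<tau> \<circ> inv \<pi>) ` stab n X \<subseteq> stab n (edge_act \<pi> ` X)"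
    proof
      fix y assume "y \<in> (\<lambda>\<tau>. \<pi> \<circ> \<tau> \<circ> inv \<pi>) ` stab n X"
      then obtain \<tau> where t: "\<tau> \<in> perms n" "edge_act \<tau> ` X = X" "y = \<pi> \<circ> \<tau> \<circ> inv \<pi>"
        unfolding stab_def by blast
      have "y \<in> perms n" using t perms_comp ip p by simp
      moreover have "edge_act y ` edge_act \<pi> ` X = edge_act \<pi> ` X"
        unfolding t(3) img edge_act_inv_image[OF p X] t(2) ..
      ultimately show "y \<in> stab n (edge_act \<pi> ` X)" unfolding stab_def by blast
    qed
  qed
  then show ?thesis by (metis bij_betw_same_card)
qed

lemma alpha_g_img:
  assumes c: "chr n f" and p: "\<pi> \<in> perms n" and X: "X \<subseteq> edges n"
  shows "alpha_g n f (edge_act \<pi> ` X) S = f \<pi> * eps \<pi> X * alpha_g n f X S"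
proof -
  define G where "G = (\<lambda>\<tau>. if edge_act \<tau> ` X = S then f \<tau> * eps \<tau> X else 0)"
  define F where "F = (\<lambda>\<sigma>. if edge_act \<sigma> ` (edge_act \<pi> ` X) = S then f \<sigma> * eps \<sigma> (edge_act \<pi> ` X) else 0)"
  have PX: "edge_act \<pi> ` X \<subseteq> edges n" using edge_act_sub[OF p X] .
  have bij: "bij_betw (\<lambda>\<sigma>. \<sigma> \<circ> \<pi>) (perms n) (perms n)"
  proof (rule bij_betw_byWitness[where f' = "\<lambda>\<sigma>. \<sigma> \<circ> inv \<pi>"])
    show "\<forall>a\<in>perms n. a \<circ> \<pi> \<circ> inv \<pi> = a" using perms_inv_comp[OF p] by (simp add: o_assoc[symmetric])
    show "\<forall>a\<in>perms n. a \<circ> inv \<pi> \<circ> \<pi> = a" using perms_inv_comp[OF p] by (simp add: o_assoc[symmetric])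
    show "(\<lambda>\<sigma>. \<sigma> \<circ> \<pi>) ` perms n \<subseteq> perms n" using perms_comp p by blast
    show "(\<lambda>\<sigma>. \<sigma> \<circ> inv \<pi>) ` perms n \<subseteq> perms n" using perms_comp perms_inv[OF p] by blast
  qed
  have "sum G (perms n) = (\<Sum>\<sigma>\<in>perms n. G (\<sigma> \<circ> \<pi>))"
    using sum.reindex_bij_betw[OF bij, of G] by simp
  also have "\<dots> = (\<Sum>\<sigma>\<in>perms n. f \<pi> * eps \<pi> X * F \<sigma>)"
  proof (rule sum.cong[OF refl])
    fix \<sigma> assume s: "\<sigma> \<in> perms n"
    have "edge_act (\<sigma> \<circ> \<pi>) ` X = edge_act \<sigma> ` (edge_act \<pi> ` X)" by (simp add: edge_act_comp image_image)
    moreover have "f (\<sigma> \<circ> \<pi>) = f \<sigma> * f \<pi>" using c s p unfolding chr_def by blast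
    moreover have "eps (\<sigma> \<circ> \<pi>) X = eps \<sigma> (edge_act \<pi> ` X) * eps \<pi> X" by (rule eps_comp[OF s p X])
    ultimately show "G (\<sigma> \<circ> \<pi>) = f \<pi> * eps \<pi> X * F \<sigma>" unfolding G_def F_def by (simp add: algebra_simps)
  qed
  also have "\<dots> = f \<pi> * eps \<pi> X * sum F (perms n)" by (simp add: sum_distrib_left)
  finally have sG: "sum G (perms n) = f \<pi> * eps \<pi> X * sum F (perms n)" .
  have ff: "f \<pi> * f \<pi> = 1" using c p unfolding chr_def by blast
  have sF: "sum F (perms n) = f \<pi> * eps \<pi> X * sum G (perms n)"
  proof -
    have "f \<pi> * eps \<pi> X * sum G (perms n) = (f \<pi> * f \<pi>) * (eps \<pi> X * eps \<pi> X) * sum F (perms n)"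
      unfolding sG by (simp add: algebra_simps)
    then show ?thesis using ff eps_sq[of \<pi> X] by simp
  qed
  show ?thesis
    unfolding alpha_g_val[OF PX] alpha_g_val[OF X] stab_card[OF p X]
    using sF unfolding F_def G_def by (simp add: algebra_simps)
qed

lemma alg1:
  fixes a b c d e f :: rat
  assumes "a*a=1" "b*b=1" "c*c=1" "d*d=1" "e*e=1" "f*f=1" "a*b = c*d*e*f"
  shows "f*a*c = b*d*e"
  using assms by algebra

lemma diff_diff_sub: "X \<subseteq> T \<Longrightarrow> T - (T - X) = X" by auto

lemma main_gen:
  fixes n r :: nat and rep :: "grph \<Rightarrow> grph" and fi fo :: "(nat \<Rightarrow> nat) \<Rightarrow> rat"
  assumes r: "r \<le> n * (n - 1) div 2" and rc: "rep_choice n rep" and ci: "chr n fi" and co: "chr n fo"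
    and eT: "\<forall>\<sigma>\<in>perms n. eps \<sigma> (edges n) = fi \<sigma> * fo \<sigma>"
  shows "\<exists>f. lin_on {v \<in> ext_deg n r. invp n fi v} f \<and>
     bij_betw f {v \<in> ext_deg n r. invp n fi v} {v \<in> ext_deg n (n * (n - 1) div 2 - r). invp n fo v} \<and>
     (\<forall>E. E \<subseteq> edges n \<and> card E = r \<longrightarrow> f (alpha_g n fi (rep E)) = alpha_g n fo (rep (edges n - E)))"
proof -
  let ?T = "edges n"
  define N where "N = n * (n - 1) div 2"
  have cT: "card ?T = N" unfolding N_def by (rule card_edges)
  have fT: "finite ?T"  by (rule fin_edges)
  define pi where "pi S = (SOME \<pi>. \<pi> \<in> perms n \<and> edge_act \<pi> ` (?T - rep (?T - S)) = rep S)" for S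
  define c where "c S = tt n (rep (?T - S)) * fo (pi S) * eps (pi S) (?T - rep (?T - S))" for S
  define \<kappa> where "\<kappa> S = c S * tt n (?T - S)" for S
  define f where "f v = (\<lambda>S. if S \<subseteq> ?T then \<kappa> S * v (?T - S) else 0)" for v :: ext
  define g where "g w = (\<lambda>X. if X \<subseteq> ?T then \<kappa> (?T - X) * w (?T - X) else 0)" for w :: ext
  define A where "A = {v \<in> ext_deg n r. invp n fi v}"
  define B where "B = {v \<in> ext_deg n (N - r). invp n fo v}"
  have pi_ok: "pi S \<in> perms n \<and> edge_act (pi S) ` (?T - rep (?T - S)) = rep S" if S: "S \<subseteq> ?T" for S
  proof -
    have TS: "?T - S \<subseteq> ?T" by auto
    have i1: "graph_iso n (?T - S) (rep (?T - S))" using rep_iso[OF rc] TS  by blast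
    have "graph_iso n (?T - (?T - S)) (?T - rep (?T - S))" using giso_compl[OF _ i1] TS  by blast
    then have i2: "graph_iso n S (?T - rep (?T - S))" using diff_diff_sub[OF S] by simp
    have i3: "graph_iso n (?T - rep (?T - S)) S" using giso_sym[OF _ i2] S  by blast
    have i4: "graph_iso n S (rep S)" using rep_iso[OF rc] S  by blast
    have "graph_iso n (?T - rep (?T - S)) (rep S)" using giso_trans[OF i3 i4] .
    then have "\<exists>\<pi>. \<pi> \<in> perms n \<and> edge_act \<pi> ` (?T - rep (?T - S)) = rep S" unfolding graph_iso_def by blast
    then show ?thesis unfolding pi_def by (rule someI_ex)
  qed
  have c_sq: "c S * c S = 1" if S: "S \<subseteq> ?T" for S
  proof -
    have "fo (pi S) * fo (pi S) = 1" using co pi_ok[OF S] unfolding chr_def by blast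
    then show ?thesis unfolding c_def
      using tt_sq[of n "rep (?T - S)"] eps_sq[of "pi S" "?T - rep (?T - S)"]
      by (simp add: algebra_simps)
  qed
  have k_sq: "\<kappa> S * \<kappa> S = 1" if S: "S \<subseteq> ?T" for S
    using c_sq[OF S] tt_sq[of n "?T - S"] unfolding \<kappa>_def by (metis mult.commute mult.left_commute mult_1_right)
  have c_inv: "c (edge_act \<sigma> ` S) = c S" if s: "\<sigma> \<in> perms n" and S: "S \<subseteq> ?T" for \<sigma> S
  proof -
    have d: "?T - edge_act \<sigma> ` S = edge_act \<sigma> ` (?T - S)" using edge_act_diff[OF s] S  by simp
    have r1: "rep (edge_act \<sigma> ` (?T - S)) = rep (?T - S)"
      by (rule rep_eq[OF rc _ giso_img[OF s]]) (auto simp:)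
    have r2: "rep (edge_act \<sigma> ` S) = rep S"
      by (rule rep_eq[OF rc _ giso_img[OF s]]) (use S in \<open>auto simp:\<close>)
    have "pi (edge_act \<sigma> ` S) = pi S" unfolding pi_def d r1 r2 ..
    then show ?thesis unfolding c_def d r1 by simp
  qed
  have K1: "\<kappa> (edge_act \<sigma> ` X) * fi \<sigma> * eps \<sigma> (?T - X) = fo \<sigma> * eps \<sigma> X * \<kappa> X"
    if s: "\<sigma> \<in> perms n" and X: "X \<subseteq> ?T" for \<sigma> X
  proof -
    have d: "?T - edge_act \<sigma> ` X = edge_act \<sigma> ` (?T - X)" using edge_act_diff[OF s] X  by simp
    have sp: "eps \<sigma> ?T = eps \<sigma> (?T - X) * eps \<sigma> X * tt n (?T - X) * tt n (edge_act \<sigma> ` (?T - X))"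
      using eps_split[OF s, of "?T - X"] diff_diff_sub[OF X]  by auto
    have "tt n (edge_act \<sigma> ` (?T - X)) * fi \<sigma> * eps \<sigma> (?T - X) = fo \<sigma> * eps \<sigma> X * tt n (?T - X)"
      by (rule alg1) (use ci co s eT sp eps_sq tt_sq in \<open>auto simp: chr_def\<close>)
    then show ?thesis unfolding \<kappa>_def c_inv[OF s X] d
      by (metis (no_types, lifting) mult.assoc mult.left_commute)
  qed
  have K2: "\<kappa> (edge_act \<sigma> ` (?T - X)) * fo \<sigma> * eps \<sigma> (?T - X) = fi \<sigma> * eps \<sigma> X * \<kappa> (?T - X)"
    if s: "\<sigma> \<in> perms n" and X: "X \<subseteq> ?T" for \<sigma> X
  proof -
    have d: "?T - edge_act \<sigma> ` (?T - X) = edge_act \<sigma> ` X"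
      using edge_act_diff[OF s, of "?T - X"] diff_diff_sub[OF X]  by auto
    have sp: "eps \<sigma> ?T = eps \<sigma> X * eps \<sigma> (?T - X) * tt n X * tt n (edge_act \<sigma> ` X)"
      using eps_split[OF s, of X] X  by auto
    have "tt n (edge_act \<sigma> ` X) * fo \<sigma> * eps \<sigma> (?T - X) = fi \<sigma> * eps \<sigma> X * tt n X"
      by (rule alg1) (use ci co s eT sp eps_sq tt_sq in \<open>auto simp: chr_def algebra_simps\<close>)
    moreover have "c (edge_act \<sigma> ` (?T - X)) = c (?T - X)" using c_inv[OF s] by auto
    ultimately show ?thesis unfolding \<kappa>_def d diff_diff_sub[OF X]
      by (metis (no_types, lifting) mult.assoc mult.left_commute)
  qed
  have fB: "f v \<in> B" if v: "v \<in> A" for v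
  proof -
    have vd: "v \<in> ext_deg n r" and vi: "invp n fi v" using v unfolding A_def by auto
    have "f v \<in> ext_deg n (N - r)"
      unfolding ext_deg_def
    proof (intro CollectI allI impI)
      fix S assume nz: "f v S \<noteq> 0"
      then have S: "S \<subseteq> ?T" and "v (?T - S) \<noteq> 0" unfolding f_def by (auto split: if_splits)
      then have "card (?T - S) = r" using vd unfolding ext_deg_def by blast
      moreover have "card (?T - S) = card ?T - card S" using S fT by (meson card_Diff_subset finite_subset)
      moreover have "card S \<le> card ?T" using S fT by (simp add: card_mono)
      ultimately show "S \<subseteq> edges n \<and> card S = N - r" using S cT  by auto
    qed
    moreover have "invp n fo (f v)"
      unfolding invp_def
    proof (intro ballI allI impI)
      fix \<sigma> Y assume s: "\<sigma> \<in> perms n" and Y: "Y \<subseteq> edges n"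
      have Y': "Y \<subseteq> ?T" using Y by simp
      have sY: "edge_act \<sigma> ` Y \<subseteq> ?T" using edge_act_sub[OF s Y] by simp
      have d: "?T - edge_act \<sigma> ` Y = edge_act \<sigma> ` (?T - Y)" using edge_act_diff[OF s Y] by simp
      have vv: "v (edge_act \<sigma> ` (?T - Y)) = fi \<sigma> * eps \<sigma> (?T - Y) * v (?T - Y)"
        using vi s unfolding invp_def by auto
      have "f v (edge_act \<sigma> ` Y) = \<kappa> (edge_act \<sigma> ` Y) * v (edge_act \<sigma> ` (?T - Y))"
        unfolding f_def using sY d by simp
      also have "\<dots> = (\<kappa> (edge_act \<sigma> ` Y) * fi \<sigma> * eps \<sigma> (?T - Y)) * v (?T - Y)" unfolding vv by (simp add: algebra_simps)
      also have "\<dots> = fo \<sigma> * eps \<sigma> Y * (\<kappa> Y * v (?T - Y))" unfolding K1[OF s Y'] by (simp add: algebra_simps)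
      also have "\<dots> = fo \<sigma> * eps \<sigma> Y * f v Y" unfolding f_def using Y' by simp
      finally show "f v (edge_act \<sigma> ` Y) = fo \<sigma> * eps \<sigma> Y * f v Y" .
    qed
    ultimately show ?thesis unfolding B_def by blast
  qed
  have gA: "g w \<in> A" if w: "w \<in> B" for w
  proof -
    have wd: "w \<in> ext_deg n (N - r)" and wi: "invp n fo w" using w unfolding B_def by auto
    have "g w \<in> ext_deg n r"
      unfolding ext_deg_def
    proof (intro CollectI allI impI)
      fix X assume nz: "g w X \<noteq> 0"
      then have X: "X \<subseteq> ?T" and "w (?T - X) \<noteq> 0" unfolding g_def by (auto split: if_splits)
      then have "card (?T - X) = N - r" using wd unfolding ext_deg_def by blast
      moreover have "card (?T - X) = card ?T - card X" using X fT by (meson card_Diff_subset finite_subset)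
      moreover have "card X \<le> card ?T" using X fT by (simp add: card_mono)
      moreover have "r \<le> N" using r unfolding N_def .
      ultimately show "X \<subseteq> edges n \<and> card X = r" using X cT  by auto
    qed
    moreover have "invp n fi (g w)"
      unfolding invp_def
    proof (intro ballI allI impI)
      fix \<sigma> X assume s: "\<sigma> \<in> perms n" and X: "X \<subseteq> edges n"
      have X': "X \<subseteq> ?T" using X by simp
      have sX: "edge_act \<sigma> ` X \<subseteq> ?T" using edge_act_sub[OF s X] by simp
      have d: "?T - edge_act \<sigma> ` X = edge_act \<sigma> ` (?T - X)" using edge_act_diff[OF s X] by simp
      have ww: "w (edge_act \<sigma> ` (?T - X)) = fo \<sigma> * eps \<sigma> (?T - X) * w (?T - X)"
        using wi s unfolding invp_def by auto
      have "g w (edge_act \<sigma> ` X) = \<kappa> (edge_act \<sigma> ` (?T - X)) * w (edge_act \<sigma> ` (?T - X))"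
        unfolding g_def using sX d by simp
      also have "\<dots> = (\<kappa> (edge_act \<sigma> ` (?T - X)) * fo \<sigma> * eps \<sigma> (?T - X)) * w (?T - X)" unfolding ww by (simp add: algebra_simps)
      also have "\<dots> = fi \<sigma> * eps \<sigma> X * (\<kappa> (?T - X) * w (?T - X))" unfolding K2[OF s X'] by (simp add: algebra_simps)
      also have "\<dots> = fi \<sigma> * eps \<sigma> X * g w X" unfolding g_def using X' by simp
      finally show "g w (edge_act \<sigma> ` X) = fi \<sigma> * eps \<sigma> X * g w X" .
    qed
    ultimately show ?thesis unfolding A_def by blast
  qed
  have gf: "g (f v) = v" if v: "v \<in> A" for v
  proof
    fix X
    show "g (f v) X = v X"
    proof (cases "X \<subseteq> ?T")
      case True
      have "g (f v) X = (\<kappa> (?T - X) * \<kappa> (?T - X)) * v X"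
        unfolding g_def f_def using True diff_diff_sub[OF True] by simp
      then show ?thesis using k_sq[of "?T - X"] by simp
    next
      case False
      then have "v X = 0" using v unfolding A_def ext_deg_def by blast
      then show ?thesis unfolding g_def using False by simp
    qed
  qed
  have fg: "f (g w) = w" if w: "w \<in> B" for w
  proof
    fix X
    show "f (g w) X = w X"
    proof (cases "X \<subseteq> ?T")
      case True
      have "f (g w) X = (\<kappa> X * \<kappa> X) * w X"
        unfolding g_def f_def using True diff_diff_sub[OF True] by simp
      then show ?thesis using k_sq[OF True] by simp
    next
      case False
      then have "w X = 0" using w unfolding B_def ext_deg_def by blast
      then show ?thesis unfolding f_def using False by simp
    qed
  qed
  have lin: "lin_on A f"
    unfolding lin_on_def f_def by (auto simp: fun_eq_iff algebra_simps)
  have bij: "bij_betw f A B"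
    by (rule bij_betw_byWitness[where f' = g]) (use gf fg fB gA in auto)
  have al: "f (alpha_g n fi (rep E)) = alpha_g n fo (rep (?T - E))" if E: "E \<subseteq> ?T" "card E = r" for E
  proof
    fix S
    define R where "R = rep E"
    define Q where "Q = rep (?T - E)"
    have E': "E \<subseteq> edges n" using E by simp
    have TE: "?T - E \<subseteq> edges n" by auto
    have R: "R \<subseteq> ?T" unfolding R_def using rep_sub[OF rc E'] .
    have Q: "Q \<subseteq> ?T" unfolding Q_def using rep_sub[OF rc TE] by simp
    have iER: "graph_iso n E R" unfolding R_def using rep_iso[OF rc E'] .
    have iTEQ: "graph_iso n (?T - E) Q" unfolding Q_def using rep_iso[OF rc TE] by simp
    have iQTR: "graph_iso n Q (?T - R)"
    proof -
      have "graph_iso n (?T - E) (?T - R)" using giso_compl[OF E' iER] by simp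
      then show ?thesis using giso_trans[OF giso_sym[OF TE iTEQ]] by simp
    qed
    show "f (alpha_g n fi R) S = alpha_g n fo Q S"
    proof (cases "S \<subseteq> ?T")
      case False
      have "\<forall>\<sigma>\<in>perms n. edge_act \<sigma> ` Q \<noteq> S" using edge_act_sub[OF _ Q] False by blast
      then have "alpha_g n fo Q S = 0"
        unfolding alpha_g_val[OF Q] by simp
      then show ?thesis unfolding f_def using False by simp
    next
      case S: True
      show ?thesis
      proof (cases "graph_iso n Q S")
        case False
        have "alpha_g n fo Q S = 0"
          unfolding alpha_g_val[OF Q]
          using False unfolding graph_iso_def by (auto intro!: sum.neutral)
        moreover have "alpha_g n fi R (?T - S) = 0"
        proof -
          have "\<not> (\<exists>\<sigma>\<in>perms n. edge_act \<sigma> ` R = ?T - S)"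
          proof
            assume "\<exists>\<sigma>\<in>perms n. edge_act \<sigma> ` R = ?T - S"
            then have "graph_iso n R (?T - S)" unfolding graph_iso_def .
            then have "graph_iso n (?T - R) (?T - (?T - S))" using giso_compl R by simp
            then have "graph_iso n (?T - R) S" using diff_diff_sub[OF S] by simp
            then have "graph_iso n Q S" using giso_trans[OF iQTR] by simp
            then show False using False by simp
          qed
          then show ?thesis unfolding alpha_g_val[OF R] by (auto intro!: sum.neutral)
        qed
        ultimately show ?thesis unfolding f_def using S by simp
      next
        case True
        have iTES: "graph_iso n (?T - E) S" using giso_trans[OF iTEQ True] .
        have rS: "rep S = Q" unfolding Q_def using rep_eq[OF rc TE iTES] by simp
        have "graph_iso n (?T - (?T - E)) (?T - S)" using giso_compl[OF TE iTES] by simp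
        then have iETS: "graph_iso n E (?T - S)" using diff_diff_sub[OF E(1)] by simp
        have rTS: "rep (?T - S) = R" unfolding R_def using rep_eq[OF rc E' iETS] .
        define \<pi> where "\<pi> = pi S"
        have p: "\<pi> \<in> perms n" and pQ: "edge_act \<pi> ` (?T - R) = Q"
          using pi_ok[OF S] rS rTS unfolding \<pi>_def by auto
        have TR: "?T - R \<subseteq> edges n" by auto
        have cS: "c S = tt n R * fo \<pi> * eps \<pi> (?T - R)" unfolding c_def rTS \<pi>_def ..
        have stabeq: "stab n (?T - R) = stab n R"
        proof -
          have "(edge_act \<sigma> ` (?T - R) = ?T - R) = (edge_act \<sigma> ` R = R)" if s: "\<sigma> \<in> perms n" for \<sigma>
          proof -
            have "edge_act \<sigma> ` (?T - R) = ?T - edge_act \<sigma> ` R" using edge_act_diff[OF s R] by simp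
            moreover have "edge_act \<sigma> ` R \<subseteq> ?T" using edge_act_sub[OF s R] by simp
            ultimately show ?thesis using R by (metis diff_diff_sub)
          qed
          then show ?thesis unfolding stab_def by (metis (no_types, lifting))
        qed
        have key: "alpha_g n fo (?T - R) S = tt n R * tt n (?T - S) * alpha_g n fi R (?T - S)"
        proof -
          have "(\<Sum>\<sigma>\<in>perms n. if edge_act \<sigma> ` (?T - R) = S then fo \<sigma> * eps \<sigma> (?T - R) else 0) =
                (\<Sum>\<sigma>\<in>perms n. tt n R * tt n (?T - S) * (if edge_act \<sigma> ` R = ?T - S then fi \<sigma> * eps \<sigma> R else 0))"
          proof (rule sum.cong[OF refl])
            fix \<sigma> assume s: "\<sigma> \<in> perms n"
            have d: "edge_act \<sigma> ` (?T - R) = ?T - edge_act \<sigma> ` R" using edge_act_diff[OF s R] by simp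
            have sR: "edge_act \<sigma> ` R \<subseteq> ?T" using edge_act_sub[OF s R] by simp
            have iff: "(edge_act \<sigma> ` (?T - R) = S) = (edge_act \<sigma> ` R = ?T - S)"
              unfolding d using S sR by (metis diff_diff_sub)
            show "(if edge_act \<sigma> ` (?T - R) = S then fo \<sigma> * eps \<sigma> (?T - R) else 0) =
                  tt n R * tt n (?T - S) * (if edge_act \<sigma> ` R = ?T - S then fi \<sigma> * eps \<sigma> R else 0)"
            proof (cases "edge_act \<sigma> ` R = ?T - S")
              case True
              have sp: "eps \<sigma> ?T = eps \<sigma> R * eps \<sigma> (?T - R) * tt n R * tt n (?T - S)"
                using eps_split[OF s R] True by simp
              have "tt n (?T - S) * fi \<sigma> * eps \<sigma> R = fo \<sigma> * eps \<sigma> (?T - R) * tt n R"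
                by (rule alg1) (use ci co s eT sp eps_sq tt_sq in \<open>auto simp: chr_def\<close>)
              then have "tt n R * (tt n (?T - S) * fi \<sigma> * eps \<sigma> R) = (tt n R * tt n R) * (fo \<sigma> * eps \<sigma> (?T - R))"
                by (simp add: algebra_simps)
              then have "tt n R * tt n (?T - S) * (fi \<sigma> * eps \<sigma> R) = fo \<sigma> * eps \<sigma> (?T - R)"
                using tt_sq[of n R] by (simp add: algebra_simps)
              then show ?thesis using True iff by simp
            next
              case False
              then show ?thesis using iff by simp
            qed
          qed
          then show ?thesis
            unfolding alpha_g_val[OF TR] alpha_g_val[OF R] stabeq
            by (simp add: sum_distrib_left[symmetric] algebra_simps)
        qed
        have "alpha_g n fo Q S = fo \<pi> * eps \<pi> (?T - R) * alpha_g n fo (?T - R) S"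
          unfolding pQ[symmetric] by (rule alpha_g_img[OF co p TR])
        also have "\<dots> = c S * tt n (?T - S) * alpha_g n fi R (?T - S)"
          unfolding key cS by (simp add: algebra_simps)
        also have "\<dots> = f (alpha_g n fi R) S" unfolding f_def \<kappa>_def using S by simp
        finally show ?thesis by simp
      qed
    qed
  qed
  show ?thesis
    using lin bij al unfolding A_def B_def N_def by blast
qed

lemma sign_pow_even: "even n \<Longrightarrow> (rat_of_int (sign \<sigma>)) ^ n = 1"
  by (cases \<sigma> rule: sign_cases) simp_all

lemma sign_pow_odd: "odd n \<Longrightarrow> (rat_of_int (sign \<sigma>)) ^ n = rat_of_int (sign \<sigma>)"
  by (cases \<sigma> rule: sign_cases) simp_all

lemma sign_sq_rat: "rat_of_int (sign \<sigma>) * rat_of_int (sign \<sigma>) = 1"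
  by (metis of_int_1 of_int_mult sign_idempotent)

theorem theorem2p42:
  fixes n r :: nat and rep :: "grph \<Rightarrow> grph"
  assumes "n \<ge> 1" and "r \<le> n * (n - 1) div 2" and "rep_choice n rep"
  shows
   "(even n \<longrightarrow> (\<exists>f. lin_on (H n r) f \<and> bij_betw f (H n r) (H n (n * (n - 1) div 2 - r)) \<and>
       (\<forall>E. E \<subseteq> edges n \<and> card E = r \<and> invariant n E \<longrightarrow>
             f (alpha n (rep E)) = alpha n (rep (edges n - E))))) \<and>
    (even n \<longrightarrow> (\<exists>f. lin_on (Hsgn n r) f \<and> bij_betw f (Hsgn n r) (Hsgn n (n * (n - 1) div 2 - r)) \<and>
       (\<forall>E. E \<subseteq> edges n \<and> card E = r \<and> skew_invariant n E \<longrightarrow>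
             f (alpha_sgn n (rep E)) = alpha_sgn n (rep (edges n - E))))) \<and>
    (odd n \<longrightarrow> (\<exists>f. lin_on (Hsgn n r) f \<and> bij_betw f (Hsgn n r) (H n (n * (n - 1) div 2 - r)) \<and>
       (\<forall>E. E \<subseteq> edges n \<and> card E = r \<and> skew_invariant n E \<longrightarrow>
             f (alpha_sgn n (rep E)) = alpha n (rep (edges n - E)))))"
proof (intro conjI impI)
  assume ev: "even n"
  have "\<forall>\<sigma>\<in>perms n. eps \<sigma> (edges n) = (\<lambda>_. 1) \<sigma> * (\<lambda>_. 1) \<sigma>"
  proof
    fix \<sigma> assume "\<sigma> \<in> perms n"
    then have "eps \<sigma> (edges n) = rat_of_int (sign \<sigma>) ^ n" by (rule eps_T)
    then show "eps \<sigma> (edges n) = (\<lambda>_. 1) \<sigma> * (\<lambda>_. 1) \<sigma>" using sign_pow_even[OF ev, of \<sigma>] by simp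
  qed
  from main_gen[OF assms(2,3) chr_one chr_one this]
  show "\<exists>f. lin_on (H n r) f \<and> bij_betw f (H n r) (H n (n * (n - 1) div 2 - r)) \<and>
       (\<forall>E. E \<subseteq> edges n \<and> card E = r \<and> invariant n E \<longrightarrow>
             f (alpha n (rep E)) = alpha n (rep (edges n - E)))"
    unfolding H_eq alpha_eq by blast
next
  assume ev: "even n"
  have "\<forall>\<sigma>\<in>perms n. eps \<sigma> (edges n) = (\<lambda>\<sigma>. rat_of_int (sign \<sigma>)) \<sigma> * (\<lambda>\<sigma>. rat_of_int (sign \<sigma>)) \<sigma>"
  proof
    fix \<sigma> assume "\<sigma> \<in> perms n"
    then have "eps \<sigma> (edges n) = rat_of_int (sign \<sigma>) ^ n" by (rule eps_T)
    then show "eps \<sigma> (edges n) = (\<lambda>\<sigma>. rat_of_int (sign \<sigma>)) \<sigma> * (\<lambda>\<sigma>. rat_of_int (sign \<sigma>)) \<sigma>"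
      using sign_pow_even[OF ev, of \<sigma>] sign_sq_rat[of \<sigma>] by simp
  qed
  from main_gen[OF assms(2,3) chr_sgn chr_sgn this]
  show "\<exists>f. lin_on (Hsgn n r) f \<and> bij_betw f (Hsgn n r) (Hsgn n (n * (n - 1) div 2 - r)) \<and>
       (\<forall>E. E \<subseteq> edges n \<and> card E = r \<and> skew_invariant n E \<longrightarrow>
             f (alpha_sgn n (rep E)) = alpha_sgn n (rep (edges n - E)))"
    unfolding Hsgn_eq alpha_sgn_eq by blast
next
  assume od: "odd n"
  have "\<forall>\<sigma>\<in>perms n. eps \<sigma> (edges n) = (\<lambda>\<sigma>. rat_of_int (sign \<sigma>)) \<sigma> * (\<lambda>_. 1) \<sigma>"
  proof
    fix \<sigma> assume "\<sigma> \<in> perms n"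
    then have "eps \<sigma> (edges n) = rat_of_int (sign \<sigma>) ^ n" by (rule eps_T)
    then show "eps \<sigma> (edges n) = (\<lambda>\<sigma>. rat_of_int (sign \<sigma>)) \<sigma> * (\<lambda>_. 1) \<sigma>"
      using sign_pow_odd[OF od, of \<sigma>] by simp
  qed
  from main_gen[OF assms(2,3) chr_sgn chr_one this]
  show "\<exists>f. lin_on (Hsgn n r) f \<and> bij_betw f (Hsgn n r) (H n (n * (n - 1) div 2 - r)) \<and>
       (\<forall>E. E \<subseteq> edges n \<and> card E = r \<and> skew_invariant n E \<longrightarrow>
             f (alpha_sgn n (rep E)) = alpha n (rep (edges n - E)))"
    unfolding Hsgn_eq H_eq alpha_sgn_eq alpha_eq by blast
qed

end
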